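(* Let $\Gamma$ be a finite simple graph. Then $\Gamma$ admits no $k$-extended irregular dominating set for $k=2$ and for $k=3$.
   Context: Let $\Gamma=(V,E)$ be a finite simple undirected graph with graph distance $d$. A vertex $v$ carrying a non-negative integer label $\ell$ is said to dominate (or cover) exactly the vertices $u$ with $d(u,v)=\ell$; in particular a vertex labeled $0$ dominates only itself. For $k\ge 0$, a $k$-extended irregular dominating set is a set $S\subseteq V$ of $k$ vertices together with a labeling $\lambda:S\to\mathbb{Z}_{\ge 0}$ assigning distinct labels to distinct vertices, such that every vertex of $V$ is dominated by at least one vertex of $S$; throughout, it is assumed that some vertex of $S$ has label $0$. The labeling $\lambda$ is called a $k$-extended irregular dominating labeling. *)

theory Defs
  imports Main
begin

definition simple_graph :: "'a set \<Rightarrow> ('a \<Rightarrow> 'a \<Rightarrow> bool) \<Rightarrow> bool" where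
  "simple_graph V E \<longleftrightarrow> finite V \<and> (\<forall>u v. E u v \<longrightarrow> u \<in> V \<and> v \<in> V)
     \<and> (\<forall>u v. E u v \<longrightarrow> E v u) \<and> (\<forall>u. \<not> E u u)"

text \<open>A walk is a nonempty list of vertices of V, consecutive ones adjacent;
its length is the number of edges, i.e. length minus one.\<close>
definition walk :: "'a set \<Rightarrow> ('a \<Rightarrow> 'a \<Rightarrow> bool) \<Rightarrow> 'a list \<Rightarrow> bool" where
  "walk V E xs \<longleftrightarrow> xs \<noteq> [] \<and> set xs \<subseteq> V \<and> (\<forall>i. Suc i < length xs \<longrightarrow> E (xs ! i) (xs ! Suc i))"

definition walk_between :: "'a set \<Rightarrow> ('a \<Rightarrow> 'a \<Rightarrow> bool) \<Rightarrow> 'a \<Rightarrow> 'a \<Rightarrow> nat \<Rightarrow> bool" where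
  "walk_between V E u v n \<longleftrightarrow> (\<exists>xs. walk V E xs \<and> hd xs = u \<and> last xs = v \<and> length xs = Suc n)"

text \<open>graph distance: d(u,v) = n iff there is a u-v walk of length n and none shorter
(vertices in different components have infinite distance, equal to no natural number).\<close>
definition dist_is :: "'a set \<Rightarrow> ('a \<Rightarrow> 'a \<Rightarrow> bool) \<Rightarrow> 'a \<Rightarrow> 'a \<Rightarrow> nat \<Rightarrow> bool" where
  "dist_is V E u v n \<longleftrightarrow> walk_between V E u v n \<and> (\<forall>m<n. \<not> walk_between V E u v m)"

definition dominates :: "'a set \<Rightarrow> ('a \<Rightarrow> 'a \<Rightarrow> bool) \<Rightarrow> 'a \<Rightarrow> nat \<Rightarrow> 'a \<Rightarrow> bool" where
  "dominates V E v l u \<longleftrightarrow> dist_is V E u v l"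

definition ext_irr_dom_set ::
  "'a set \<Rightarrow> ('a \<Rightarrow> 'a \<Rightarrow> bool) \<Rightarrow> nat \<Rightarrow> 'a set \<Rightarrow> ('a \<Rightarrow> nat) \<Rightarrow> bool" where
  "ext_irr_dom_set V E k S lam \<longleftrightarrow> S \<subseteq> V \<and> card S = k \<and> inj_on lam S
     \<and> (\<exists>s\<in>S. lam s = 0) \<and> (\<forall>u\<in>V. \<exists>s\<in>S. dominates V E s (lam s) u)"

end

theory Submission
  imports Defs
begin
lemma walk_rev: "walk V E xs \<Longrightarrow> (\<forall>u v. E u v \<longrightarrow> E v u) \<Longrightarrow> walk V E (rev xs)"
  unfolding walk_def
proof (intro conjI allI impI; (elim conjE)?)
  fix i assume a: "xs \<noteq> []" "set xs \<subseteq> V" "\<forall>i. Suc i < length xs \<longrightarrow> E (xs ! i) (xs ! Suc i)"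
    "\<forall>u v. E u v \<longrightarrow> E v u" "Suc i < length (rev xs)"
  define j where "j = length xs - Suc (Suc i)"
  have j: "Suc j < length xs" "length xs - Suc i = Suc j" "length xs - Suc (Suc i) = j"
    using a(5) unfolding j_def by auto
  have "E (xs ! j) (xs ! Suc j)" using a(3) j by blast
  then show "E (rev xs ! i) (rev xs ! Suc i)" using a(4) a(5) j by (auto simp: rev_nth)
qed auto
lemma wb_sym: "walk_between V E u v n \<Longrightarrow> (\<forall>u v. E u v \<longrightarrow> E v u) \<Longrightarrow> walk_between V E v u n"
proof -
  assume a: "walk_between V E u v n" and s: "\<forall>u v. E u v \<longrightarrow> E v u"
  then obtain xs where xs: "walk V E xs" "hd xs = u" "last xs = v" "length xs = Suc n"
    unfolding walk_between_def by blast
  have ne: "xs \<noteq> []" using xs(4) by auto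
  show ?thesis unfolding walk_between_def
    by (rule exI[of _ "rev xs"]) (simp add: walk_rev[OF xs(1) s] hd_rev last_rev ne xs)
qed

lemma dist_sym: "dist_is V E u v n \<Longrightarrow> (\<forall>u v. E u v \<longrightarrow> E v u) \<Longrightarrow> dist_is V E v u n"
  unfolding dist_is_def by (meson wb_sym)

lemma dist_uniq: "dist_is V E u v n \<Longrightarrow> dist_is V E u v m \<Longrightarrow> n = m"
  unfolding dist_is_def by (metis linorder_neqE_nat)

lemma dist_self: "u \<in> V \<Longrightarrow> dist_is V E u u 0"
  unfolding dist_is_def walk_between_def walk_def
  by (rule conjI, rule exI[of _ "[u]"]) auto

lemma dist_zero: "dist_is V E u v 0 \<Longrightarrow> u = v"
  unfolding dist_is_def walk_between_def
  by (auto simp: length_Suc_conv)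

theorem proposition2p2:
  fixes V :: "'a set" and E :: "'a \<Rightarrow> 'a \<Rightarrow> bool"
    and S :: "'a set" and lam :: "'a \<Rightarrow> nat" and k :: nat
  assumes "simple_graph V E"
    and "k = 2 \<or> k = 3"
  shows "\<not> ext_irr_dom_set V E k S lam"
proof
  assume H: "ext_irr_dom_set V E k S lam"
  have sym: "\<forall>u v. E u v \<longrightarrow> E v u" using assms(1) unfolding simple_graph_def by blast
  from H have SV: "S \<subseteq> V" and cS: "card S = k" and inj: "inj_on lam S"
    and cov: "\<forall>u\<in>V. \<exists>s\<in>S. dominates V E s (lam s) u"
    unfolding ext_irr_dom_set_def by auto
  from H obtain z where z: "z \<in> S" "lam z = 0" unfolding ext_irr_dom_set_def by auto
  define T where "T = S - {z}"
  have fin: "finite S" using cS assms(2) card.infinite by fastforce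
  have cT: "card T = k - 1" unfolding T_def using fin z cS by simp
  have part: "\<exists>t'\<in>T. t' \<noteq> t \<and> dist_is V E t t' (lam t')" if t: "t \<in> T" for t
  proof -
    have tS: "t \<in> S" and tz: "t \<noteq> z" using t unfolding T_def by auto
    have lt: "lam t \<noteq> 0" using inj tS z tz unfolding inj_on_def by metis
    from cov tS SV obtain s where s: "s \<in> S" "dist_is V E t s (lam s)"
      unfolding dominates_def by blast
    have "s \<noteq> t"
    proof
      assume "s = t"
      then have "dist_is V E t t (lam t)" using s by simp
      moreover have "dist_is V E t t 0" using dist_self[of t V E] tS SV by blast
      ultimately show False using lt dist_uniq by metis
    qed
    moreover have "s \<noteq> z" using s z dist_zero tz by metis
    ultimately show ?thesis using s unfolding T_def by blast
  qed
  show False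
  proof (cases "k = 2")
    case True
    then obtain t where "T = {t}" using cT card_1_singletonE by auto
    then show False using part[of t] by auto
  next
    case False
    then have "k = 3" using assms(2) by simp
    then obtain b c where bc: "T = {b, c}" "b \<noteq> c" using cT card_2_iff[of T] by auto
    from part[of b] bc have d1: "dist_is V E b c (lam c)" by auto
    from part[of c] bc have d2: "dist_is V E c b (lam b)" by auto
    have "lam b = lam c" using dist_uniq[OF dist_sym[OF d1 sym] d2] by simp
    moreover have "b \<in> S" "c \<in> S" using bc unfolding T_def by auto
    ultimately show False using inj bc(2) unfolding inj_on_def by blast
  qed
qed

end
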